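(* The natural surjection $BT(3,3)\to B(3,3)$ is an isomorphism.
   Context: $BT(3,3)$ is the quotient of the free group $\mathbb{F}_3$ by the normal subgroup generated by the cubes of all primitive elements (elements of some free basis) of $\mathbb{F}_3$; $B(3,3)$ is the free Burnside group of exponent $3$ on $3$ generators. *)

theory Defs
  imports "HOL-Algebra.Algebra"
begin

text \<open>Words over letters (generator, sign); sign True = generator, False = its inverse.
A word is (freely) reduced if no letter is immediately followed by its inverse.\<close>
definition reduced_word :: "('a \<times> bool) list \<Rightarrow> bool" where
  "reduced_word xs = (\<forall>i. Suc i < length xs \<longrightarrow>
      \<not> (fst (xs ! i) = fst (xs ! Suc i) \<and> snd (xs ! i) \<noteq> snd (xs ! Suc i)))"

fun push_letter :: "'a \<times> bool \<Rightarrow> ('a \<times> bool) list \<Rightarrow> ('a \<times> bool) list" where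
  "push_letter x [] = [x]"
| "push_letter x (y # ys) =
     (if fst x = fst y \<and> snd x \<noteq> snd y then ys else x # y # ys)"

definition reduce_word :: "('a \<times> bool) list \<Rightarrow> ('a \<times> bool) list" where
  "reduce_word xs = foldr push_letter xs []"

definition F3 :: "(nat \<times> bool) list monoid" where
  "F3 = \<lparr> carrier = {xs. reduced_word xs \<and> set xs \<subseteq> {0..<3} \<times> UNIV},
          monoid.mult = (\<lambda>xs ys. reduce_word (xs @ ys)),
          one = [] \<rparr>"

definition word_eval :: "('a, 'b) monoid_scheme \<Rightarrow> ('a \<times> bool) list \<Rightarrow> 'a" where
  "word_eval G ws = foldr (\<lambda>(b, s) acc. (if s then b else inv\<^bsub>G\<^esub> b) \<otimes>\<^bsub>G\<^esub> acc) ws \<one>\<^bsub>G\<^esub>"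

definition free_basis :: "('a, 'b) monoid_scheme \<Rightarrow> 'a set \<Rightarrow> bool" where
  "free_basis G B \<longleftrightarrow> B \<subseteq> carrier G \<and> generate G B = carrier G \<and>
     (\<forall>ws. ws \<noteq> [] \<and> set ws \<subseteq> B \<times> UNIV \<and> reduced_word ws \<longrightarrow> word_eval G ws \<noteq> \<one>\<^bsub>G\<^esub>)"

definition primitive :: "('a, 'b) monoid_scheme \<Rightarrow> 'a \<Rightarrow> bool" where
  "primitive G x \<longleftrightarrow> (\<exists>B. free_basis G B \<and> x \<in> B)"

definition normal_closure :: "('a, 'b) monoid_scheme \<Rightarrow> 'a set \<Rightarrow> 'a set" where
  "normal_closure G S = \<Inter> {N. N \<lhd> G \<and> S \<subseteq> N}"

text \<open>Kernel of F_3 \<rightarrow> BT(3,3) and of F_3 \<rightarrow> B(3,3).\<close>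
definition N_BT :: "(nat \<times> bool) list set" where
  "N_BT = normal_closure F3 {x [^]\<^bsub>F3\<^esub> (3::nat) | x. primitive F3 x}"

definition N_B :: "(nat \<times> bool) list set" where
  "N_B = normal_closure F3 {x [^]\<^bsub>F3\<^esub> (3::nat) | x. x \<in> carrier F3}"

end

theory Submission
  imports Defs
begin

fun red :: "('a \<times> bool) list \<Rightarrow> bool" where
  "red [] = True"
| "red [x] = True"
| "red (x # y # ys) = (\<not> (fst x = fst y \<and> snd x \<noteq> snd y) \<and> red (y # ys))"

lemma reduced_word_red: "reduced_word xs = red xs"
proof (induction xs rule: red.induct)
  case 1 then show ?case by (simp add: reduced_word_def)
next
  case (2 x) then show ?case by (simp add: reduced_word_def)
next
  case (3 x y ys)
  have "reduced_word (x # y # ys) = (\<not> (fst x = fst y \<and> snd x \<noteq> snd y) \<and> reduced_word (y # ys))"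
    unfolding reduced_word_def
  proof
    assume H: "\<forall>i. Suc i < length (x # y # ys) \<longrightarrow>
      \<not> (fst ((x # y # ys) ! i) = fst ((x # y # ys) ! Suc i) \<and> snd ((x # y # ys) ! i) \<noteq> snd ((x # y # ys) ! Suc i))"
    show "\<not> (fst x = fst y \<and> snd x \<noteq> snd y) \<and>
    (\<forall>i. Suc i < length (y # ys) \<longrightarrow> \<not> (fst ((y # ys) ! i) = fst ((y # ys) ! Suc i) \<and> snd ((y # ys) ! i) \<noteq> snd ((y # ys) ! Suc i)))"
    proof
      show "\<not> (fst x = fst y \<and> snd x \<noteq> snd y)" using H[rule_format, of 0] by simp
      show "\<forall>i. Suc i < length (y # ys) \<longrightarrow> \<not> (fst ((y # ys) ! i) = fst ((y # ys) ! Suc i) \<and> snd ((y # ys) ! i) \<noteq> snd ((y # ys) ! Suc i))"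
        using H[rule_format, of "Suc i" for i] by (metis Suc_less_eq length_Cons nth_Cons_Suc)
    qed
  next
    assume H: "\<not> (fst x = fst y \<and> snd x \<noteq> snd y) \<and>
    (\<forall>i. Suc i < length (y # ys) \<longrightarrow> \<not> (fst ((y # ys) ! i) = fst ((y # ys) ! Suc i) \<and> snd ((y # ys) ! i) \<noteq> snd ((y # ys) ! Suc i)))"
    show "\<forall>i. Suc i < length (x # y # ys) \<longrightarrow>
      \<not> (fst ((x # y # ys) ! i) = fst ((x # y # ys) ! Suc i) \<and> snd ((x # y # ys) ! i) \<noteq> snd ((x # y # ys) ! Suc i))"
    proof (intro allI impI)
      fix i assume "Suc i < length (x # y # ys)"
      then show "\<not> (fst ((x # y # ys) ! i) = fst ((x # y # ys) ! Suc i) \<and> snd ((x # y # ys) ! i) \<noteq> snd ((x # y # ys) ! Suc i))"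
        using H by (cases i) auto
    qed
  qed
  then show ?case using 3 by simp
qed

definition cancel :: "'a \<times> bool \<Rightarrow> 'a \<times> bool \<Rightarrow> bool" where
  "cancel x y \<longleftrightarrow> fst x = fst y \<and> snd x \<noteq> snd y"

definition flip :: "'a \<times> bool \<Rightarrow> 'a \<times> bool" where
  "flip x = (fst x, \<not> snd x)"

lemma red_tl: "red (y # ys) \<Longrightarrow> red ys"
  by (cases ys) auto

lemma red_push: "red ys \<Longrightarrow> red (push_letter x ys)"
proof (cases ys)
  case Nil then show ?thesis by simp
next
  case (Cons y ys')
  assume "red ys"
  then show ?thesis using Cons by (auto dest: red_tl)
qed

lemma red_foldr: "red ys \<Longrightarrow> red (foldr push_letter xs ys)"
  by (induction xs) (auto intro: red_push)

lemma push_red: "red (x # ys) \<Longrightarrow> push_letter x ys = x # ys"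
  by (cases ys) auto

lemma red_reduce: "red (reduce_word xs)"
  unfolding reduce_word_def by (rule red_foldr) simp

lemma reduce_red: "red xs \<Longrightarrow> reduce_word xs = xs"
proof (induction xs)
  case Nil then show ?case by (simp add: reduce_word_def)
next
  case (Cons x xs)
  then have "reduce_word xs = xs" using red_tl by blast
  then show ?case using Cons(2) push_red[of x xs] by (simp add: reduce_word_def)
qed

lemma push_push_flip: "red r \<Longrightarrow> push_letter x (push_letter (flip x) r) = r"
proof (cases r)
  case Nil then show ?thesis by (simp add: flip_def)
next
  case (Cons y r')
  assume R: "red r"
  show ?thesis
  proof (cases "fst (flip x) = fst y \<and> snd (flip x) \<noteq> snd y")
    case True
    then have "y = x" by (cases x, cases y) (auto simp: flip_def)
    then have "push_letter (flip x) r = r'" using Cons True by simp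
    moreover have "push_letter x r' = r" using R Cons \<open>y = x\<close> push_red by blast
    ultimately show ?thesis by simp
  next
    case False
    then show ?thesis using Cons by (auto simp: flip_def)
  qed
qed

lemma foldr_push_push:
  assumes "red ys" "red zs"
  shows "foldr push_letter (push_letter x ys) zs = push_letter x (foldr push_letter ys zs)"
proof (cases ys)
  case Nil then show ?thesis by simp
next
  case (Cons y ys')
  show ?thesis
  proof (cases "fst x = fst y \<and> snd x \<noteq> snd y")
    case True
    then have "y = flip x" by (cases x, cases y) (auto simp: flip_def)
    have "red (foldr push_letter ys' zs)" using assms Cons red_tl red_foldr by blast
    then have "push_letter x (push_letter y (foldr push_letter ys' zs)) = foldr push_letter ys' zs"
      using push_push_flip \<open>y = flip x\<close> by blast
    then show ?thesis using Cons True by simp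
  next
    case False
    then have "push_letter x ys = x # ys" using Cons by simp
    then show ?thesis by simp
  qed
qed

lemma foldr_assoc:
  assumes "red ys" "red zs"
  shows "foldr push_letter (foldr push_letter xs ys) zs = foldr push_letter xs (foldr push_letter ys zs)"
proof (induction xs)
  case Nil then show ?case by simp
next
  case (Cons x xs)
  have "foldr push_letter (foldr push_letter (x # xs) ys) zs
      = foldr push_letter (push_letter x (foldr push_letter xs ys)) zs" by simp
  also have "\<dots> = push_letter x (foldr push_letter (foldr push_letter xs ys) zs)"
    using foldr_push_push red_foldr assms by blast
  finally show ?case using Cons by simp
qed

lemma reduce_append: "reduce_word (xs @ ys) = foldr push_letter xs (reduce_word ys)"
  by (simp add: reduce_word_def)

lemma set_push: "set (push_letter x ys) \<subseteq> insert x (set ys)"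
  by (cases ys) auto

lemma set_foldr_push: "set (foldr push_letter xs ys) \<subseteq> set xs \<union> set ys"
  by (induction xs) (use set_push in fastforce)+

lemma set_reduce: "set (reduce_word xs) \<subseteq> set xs"
  unfolding reduce_word_def using set_foldr_push[of xs "[]"] by simp

lemma F3_carrier: "carrier F3 = {xs. red xs \<and> set xs \<subseteq> {0..<3} \<times> UNIV}"
  by (simp add: F3_def reduced_word_red)

lemma F3_mult: "xs \<otimes>\<^bsub>F3\<^esub> ys = reduce_word (xs @ ys)"
  by (simp add: F3_def)

lemma F3_one: "\<one>\<^bsub>F3\<^esub> = []"
  by (simp add: F3_def)

lemma F3_mult_red: "red ys \<Longrightarrow> xs \<otimes>\<^bsub>F3\<^esub> ys = foldr push_letter xs ys"
  by (simp add: F3_mult reduce_append reduce_red)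

definition winv :: "('a \<times> bool) list \<Rightarrow> ('a \<times> bool) list" where
  "winv xs = rev (map flip xs)"

lemma foldr_winv: "foldr push_letter (winv xs) xs = []"
proof (induction xs)
  case Nil then show ?case by (simp add: winv_def)
next
  case (Cons x xs)
  have "push_letter (flip x) (x # xs) = xs" by (simp add: flip_def)
  then show ?case using Cons by (simp add: winv_def)
qed

lemma F3_group: "group F3"
proof (rule groupI)
  fix x y assume "x \<in> carrier F3" "y \<in> carrier F3"
  then show "x \<otimes>\<^bsub>F3\<^esub> y \<in> carrier F3"
    unfolding F3_carrier F3_mult using red_reduce set_reduce[of "x @ y"] by auto
next
  show "\<one>\<^bsub>F3\<^esub> \<in> carrier F3" by (simp add: F3_carrier F3_one)
next
  fix x y z assume "x \<in> carrier F3" "y \<in> carrier F3" "z \<in> carrier F3"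
  then show "x \<otimes>\<^bsub>F3\<^esub> y \<otimes>\<^bsub>F3\<^esub> z = x \<otimes>\<^bsub>F3\<^esub> (y \<otimes>\<^bsub>F3\<^esub> z)"
    unfolding F3_carrier
    by (simp add: F3_mult_red red_foldr foldr_assoc)
next
  fix x assume "x \<in> carrier F3"
  then show "\<one>\<^bsub>F3\<^esub> \<otimes>\<^bsub>F3\<^esub> x = x"
    unfolding F3_carrier by (simp add: F3_one F3_mult_red)
next
  fix x assume x: "x \<in> carrier F3"
  let ?y = "reduce_word (winv x)"
  have "?y \<in> carrier F3"
    using x unfolding F3_carrier winv_def using red_reduce set_reduce[of "rev (map flip x)"]
    by (force simp: flip_def)
  moreover have "?y \<otimes>\<^bsub>F3\<^esub> x = \<one>\<^bsub>F3\<^esub>"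
  proof -
    have "?y \<otimes>\<^bsub>F3\<^esub> x = foldr push_letter (foldr push_letter (winv x) []) x"
      using x by (simp add: F3_carrier F3_mult_red reduce_word_def)
    also have "\<dots> = foldr push_letter (winv x) (foldr push_letter [] x)"
      using x by (intro foldr_assoc) (auto simp: F3_carrier)
    also have "\<dots> = []" by (simp add: foldr_winv)
    finally show ?thesis by (simp add: F3_one)
  qed
  ultimately show "\<exists>y\<in>carrier F3. y \<otimes>\<^bsub>F3\<^esub> x = \<one>\<^bsub>F3\<^esub>" by blast
qed

definition lt :: "('a,'b) monoid_scheme \<Rightarrow> (nat \<Rightarrow> 'a) \<Rightarrow> nat \<times> bool \<Rightarrow> 'a" where
  "lt G g x = (if snd x then g (fst x) else inv\<^bsub>G\<^esub> (g (fst x)))"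

definition ev :: "('a,'b) monoid_scheme \<Rightarrow> (nat \<Rightarrow> 'a) \<Rightarrow> (nat \<times> bool) list \<Rightarrow> 'a" where
  "ev G g w = foldr (\<lambda>x acc. lt G g x \<otimes>\<^bsub>G\<^esub> acc) w \<one>\<^bsub>G\<^esub>"

lemma ev_Nil[simp]: "ev G g [] = \<one>\<^bsub>G\<^esub>" by (simp add: ev_def)
lemma ev_Cons[simp]: "ev G g (x # w) = lt G g x \<otimes>\<^bsub>G\<^esub> ev G g w" by (simp add: ev_def)

lemma ev_cong: "(\<forall>x\<in>set w. g (fst x) = g' (fst x)) \<Longrightarrow> ev G g w = ev G g' w"
  by (induction w) (auto simp: lt_def)

lemma word_eval_ev: "word_eval G (map (\<lambda>x. (g (fst x), snd x)) w) = ev G g w"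
  by (induction w) (auto simp: word_eval_def lt_def ev_def split: prod.splits)

context group begin

lemma lt_closed: "g (fst x) \<in> carrier G \<Longrightarrow> lt G g x \<in> carrier G"
  by (simp add: lt_def)

lemma ev_closed: "\<forall>x\<in>set w. g (fst x) \<in> carrier G \<Longrightarrow> ev G g w \<in> carrier G"
  by (induction w) (auto intro: lt_closed)

lemma lt_flip: "g (fst x) \<in> carrier G \<Longrightarrow> lt G g x \<otimes> lt G g (flip x) = \<one>"
  by (simp add: lt_def flip_def)

lemma ev_push:
  assumes "\<forall>y\<in>insert x (set r). g (fst y) \<in> carrier G"
  shows "ev G g (push_letter x r) = lt G g x \<otimes> ev G g r"
proof (cases r)
  case Nil then show ?thesis using assms by (simp add: lt_closed)
next
  case (Cons y r')
  show ?thesis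
  proof (cases "fst x = fst y \<and> snd x \<noteq> snd y")
    case True
    then have y: "y = flip x" by (cases x, cases y) (auto simp: flip_def)
    have c: "lt G g x \<in> carrier G" "lt G g y \<in> carrier G" "ev G g r' \<in> carrier G"
      using assms Cons by (auto intro!: lt_closed ev_closed)
    have "lt G g x \<otimes> ev G g r = (lt G g x \<otimes> lt G g y) \<otimes> ev G g r'"
      using Cons c by (simp add: m_assoc)
    also have "\<dots> = ev G g r'" using y lt_flip assms c by simp
    finally show ?thesis using Cons True by simp
  next
    case False
    then have "push_letter x r = x # r" using Cons by simp
    then show ?thesis by simp
  qed
qed

lemma ev_foldr:
  assumes "\<forall>y\<in>set xs \<union> set ys. g (fst y) \<in> carrier G"
  shows "ev G g (foldr push_letter xs ys) = ev G g xs \<otimes> ev G g ys"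
  using assms
proof (induction xs)
  case Nil then show ?case by (simp add: ev_closed)
next
  case (Cons x xs)
  have s: "set (foldr push_letter xs ys) \<subseteq> set xs \<union> set ys" by (rule set_foldr_push)
  have "ev G g (foldr push_letter (x # xs) ys) = lt G g x \<otimes> ev G g (foldr push_letter xs ys)"
    using Cons.prems s by (simp, intro ev_push) auto
  also have "\<dots> = lt G g x \<otimes> (ev G g xs \<otimes> ev G g ys)" using Cons by simp
  also have "\<dots> = ev G g (x # xs) \<otimes> ev G g ys"
    using Cons.prems by (simp add: m_assoc lt_closed ev_closed)
  finally show ?case .
qed

lemma ev_reduce:
  assumes "\<forall>y\<in>set w. g (fst y) \<in> carrier G"
  shows "ev G g (reduce_word w) = ev G g w"
  using ev_foldr[of w "[]" g] assms by (simp add: reduce_word_def ev_closed)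

lemma ev_mult_F3:
  assumes "\<forall>i<3. g i \<in> carrier G" "x \<in> carrier F3" "y \<in> carrier F3"
  shows "ev G g (x \<otimes>\<^bsub>F3\<^esub> y) = ev G g x \<otimes> ev G g y"
proof -
  have "\<forall>z\<in>set x \<union> set y. g (fst z) \<in> carrier G"
    using assms by (auto simp: F3_carrier)
  then show ?thesis using assms(3) by (simp add: F3_carrier F3_mult_red ev_foldr)
qed

lemma ev_hom:
  assumes "\<forall>i<3. g i \<in> carrier G"
  shows "ev G g \<in> hom F3 G"
proof (rule homI)
  fix x assume "x \<in> carrier F3"
  then show "ev G g x \<in> carrier G" using assms by (intro ev_closed) (auto simp: F3_carrier)
next
  fix x y assume "x \<in> carrier F3" "y \<in> carrier F3"
  then show "ev G g (x \<otimes>\<^bsub>F3\<^esub> y) = ev G g x \<otimes> ev G g y" using ev_mult_F3 assms by blast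
qed

lemma ev_generate:
  assumes "\<forall>x\<in>set w. fst x \<in> I" "g ` I \<subseteq> carrier G"
  shows "ev G g w \<in> generate G (g ` I)"
  using assms(1)
proof (induction w)
  case Nil then show ?case by (simp add: generate.one)
next
  case (Cons x w)
  have "lt G g x \<in> generate G (g ` I)"
    using Cons.prems by (auto simp: lt_def intro: generate.incl generate.inv)
  then show ?case using Cons by (simp add: generate.eng)
qed

end

lemma hom_ev:
  assumes "group G" "group H" "f \<in> hom G H" "\<forall>x\<in>set w. g (fst x) \<in> carrier G"
  shows "f (ev G g w) = ev H (f \<circ> g) w"
proof -
  interpret gh: group_hom G H f using assms by (simp add: group_hom_def group_hom_axioms_def)
  show ?thesis using assms(4)
proof (induction w)
  case Nil then show ?case by simp
next
  case (Cons x w)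
  have "f (ev G g (x # w)) = f (lt G g x) \<otimes>\<^bsub>H\<^esub> f (ev G g w)"
    using Cons.prems by (simp add: gh.G.lt_closed gh.G.ev_closed)
  moreover have "f (lt G g x) = lt H (f \<circ> g) x"
    using Cons.prems by (simp add: lt_def)
  ultimately show ?case using Cons by (simp add: comp_def)
qed
qed

definition e3 :: "nat \<Rightarrow> (nat \<times> bool) list" where "e3 i = [(i, True)]"

lemma F3_inv: "u \<in> carrier F3 \<Longrightarrow> inv\<^bsub>F3\<^esub> u = reduce_word (winv u)"
proof -
  assume u: "u \<in> carrier F3"
  interpret group F3 by (rule F3_group)
  have c: "reduce_word (winv u) \<in> carrier F3"
    using u unfolding F3_carrier winv_def using red_reduce set_reduce[of "rev (map flip u)"]
    by (force simp: flip_def)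
  have "reduce_word (winv u) \<otimes>\<^bsub>F3\<^esub> u = []"
  proof -
    have "reduce_word (winv u) \<otimes>\<^bsub>F3\<^esub> u = foldr push_letter (foldr push_letter (winv u) []) u"
      using u by (simp add: F3_carrier F3_mult_red reduce_word_def)
    also have "\<dots> = foldr push_letter (winv u) (foldr push_letter [] u)"
      using u by (intro foldr_assoc) (auto simp: F3_carrier)
    also have "\<dots> = []" by (simp add: foldr_winv)
    finally show ?thesis .
  qed
  then show ?thesis using inv_equality[OF _ u c] by (simp add: F3_one)
qed

lemma set_F3_inv: "u \<in> carrier F3 \<Longrightarrow> fst ` set (inv\<^bsub>F3\<^esub> u) \<subseteq> fst ` set u"
  using set_reduce[of "winv u"] by (force simp: F3_inv winv_def flip_def)

lemma e3_carrier: "i < 3 \<Longrightarrow> e3 i \<in> carrier F3"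
  by (simp add: e3_def F3_carrier)

lemma lt_e3: "fst x < 3 \<Longrightarrow> lt F3 e3 x = [x]"
proof -
  assume "fst x < 3"
  have "inv\<^bsub>F3\<^esub> (e3 (fst x)) = reduce_word [(fst x, False)]"
    using \<open>fst x < 3\<close> by (simp add: F3_inv e3_carrier) (simp add: e3_def winv_def flip_def)
  then show ?thesis by (cases x) (auto simp: lt_def e3_def reduce_word_def)
qed

lemma ev_e3: "\<forall>x\<in>set w. fst x < 3 \<Longrightarrow> ev F3 e3 w = reduce_word w"
proof (induction w)
  case Nil then show ?case by (simp add: F3_one reduce_word_def)
next
  case (Cons x w)
  then have "ev F3 e3 (x # w) = [x] \<otimes>\<^bsub>F3\<^esub> reduce_word w" by (simp add: lt_e3)
  also have "\<dots> = push_letter x (reduce_word w)" by (simp add: F3_mult_red red_reduce)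
  finally show ?case by (simp add: reduce_word_def)
qed

lemma ev_e3_carrier: "w \<in> carrier F3 \<Longrightarrow> ev F3 e3 w = w"
  by (subst ev_e3) (auto simp: F3_carrier reduce_red)

lemma red_map: "inj_on k (fst ` set ws) \<Longrightarrow> red (map (\<lambda>x. (k (fst x), snd x)) ws) = red ws"
proof (induction ws rule: red.induct)
  case (3 x y ys)
  have "k (fst x) = k (fst y) \<longleftrightarrow> fst x = fst y" using 3(2) by (auto dest: inj_onD)
  moreover have "inj_on k (fst ` set (y # ys))" using 3(2) by (auto intro: inj_on_subset)
  ultimately show ?case using 3 by simp
qed auto

lemma free_basis_aut:
  assumes g: "\<forall>i<3. g i \<in> carrier F3" and h: "\<forall>i<3. h i \<in> carrier F3"
    and hg: "\<forall>w\<in>carrier F3. ev F3 h (ev F3 g w) = w"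
    and gh: "\<forall>w\<in>carrier F3. ev F3 g (ev F3 h w) = w"
  shows "free_basis F3 (g ` {0..<3})"
proof -
  interpret group F3 by (rule F3_group)
  have sub: "g ` {0..<3} \<subseteq> carrier F3" using g by auto
  have gen: "generate F3 (g ` {0..<3}) = carrier F3"
  proof
    show "generate F3 (g ` {0..<3}) \<subseteq> carrier F3" using generate_incl[OF sub] .
    show "carrier F3 \<subseteq> generate F3 (g ` {0..<3})"
    proof
      fix w assume w: "w \<in> carrier F3"
      have "ev F3 h w \<in> carrier F3" using ev_hom[OF h] w by (auto simp: hom_def)
      then have "ev F3 g (ev F3 h w) \<in> generate F3 (g ` {0..<3})"
        using sub by (intro ev_generate) (auto simp: F3_carrier)
      then show "w \<in> generate F3 (g ` {0..<3})" using gh w by simp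
    qed
  qed
  have gi: "ev F3 g (e3 i) = g i" if "i < 3" for i
    using g that by (simp add: e3_def lt_def e3_carrier)
  have inj: "inj_on g {0..<3}"
  proof (rule inj_onI)
    fix i j assume ij: "i \<in> {0..<3}" "j \<in> {0..<3}" "g i = g j"
    have "e3 i = ev F3 h (ev F3 g (e3 i))" using hg e3_carrier ij by simp
    also have "\<dots> = ev F3 h (ev F3 g (e3 j))" using gi ij by simp
    also have "\<dots> = e3 j" using hg e3_carrier ij by simp
    finally show "i = j" by (simp add: e3_def)
  qed
  have free: "word_eval F3 ws \<noteq> \<one>\<^bsub>F3\<^esub>"
    if ws: "ws \<noteq> []" "set ws \<subseteq> g ` {0..<3} \<times> UNIV" "reduced_word ws" for ws
  proof
    assume ev1: "word_eval F3 ws = \<one>\<^bsub>F3\<^esub>"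
    define idx where "idx = inv_into {0..<3} g"
    define ws' where "ws' = map (\<lambda>x. (idx (fst x), snd x)) ws"
    have idx_in: "idx b \<in> {0..<3}" if "b \<in> g ` {0..<3}" for b
      using that unfolding idx_def by (rule inv_into_into)
    have g_idx: "g (idx b) = b" if "b \<in> g ` {0..<3}" for b
      using that by (simp add: idx_def f_inv_into_f)
    have "map (\<lambda>x. (g (fst x), snd x)) ws' = ws"
      unfolding ws'_def using ws(2) g_idx by (induction ws) auto
    then have "word_eval F3 ws = ev F3 g ws'" using word_eval_ev[of F3 g ws'] by simp
    have inj_idx: "inj_on idx (fst ` set ws)"
    proof (rule inj_onI)
      fix a b assume ab: "a \<in> fst ` set ws" "b \<in> fst ` set ws" "idx a = idx b"
      have "a \<in> g ` {0..<3}" "b \<in> g ` {0..<3}" using ab(1,2) ws(2) by auto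
      then show "a = b" using g_idx ab(3) by metis
    qed
    have "red ws'" unfolding ws'_def using red_map[OF inj_idx] ws(3) reduced_word_red by blast
    moreover have "set ws' \<subseteq> {0..<3} \<times> UNIV" unfolding ws'_def using ws(2) idx_in by force
    ultimately have ws'c: "ws' \<in> carrier F3" by (simp add: F3_carrier)
    have "ev F3 g ws' = []" using ev1 \<open>word_eval F3 ws = ev F3 g ws'\<close> by (simp add: F3_one)
    then have "ws' = ev F3 h []" using hg ws'c by metis
    then have "ws' = []" by (simp add: F3_one)
    then show False using ws(1) by (simp add: ws'_def)
  qed
  show ?thesis unfolding free_basis_def using sub gen free by blast
qed

definition gi :: "nat \<Rightarrow> (nat \<times> bool) list \<Rightarrow> nat \<Rightarrow> (nat \<times> bool) list" where
  "gi i u = (\<lambda>j. if j = i then e3 i \<otimes>\<^bsub>F3\<^esub> u else e3 j)"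

lemma gi_carrier: "i < 3 \<Longrightarrow> u \<in> carrier F3 \<Longrightarrow> \<forall>j<3. gi i u j \<in> carrier F3"
  using monoid.m_closed[OF group.is_monoid[OF F3_group]] e3_carrier by (simp add: gi_def)

lemma Phi_inv:
  assumes i: "i < 3" and u: "u \<in> carrier F3" "i \<notin> fst ` set u" and w: "w \<in> carrier F3"
  shows "ev F3 (gi i (inv\<^bsub>F3\<^esub> u)) (ev F3 (gi i u) w) = w"
proof -
  interpret group F3 by (rule F3_group)
  have iu: "inv\<^bsub>F3\<^esub> u \<in> carrier F3" using u by simp
  have g1: "\<forall>j<3. gi i u j \<in> carrier F3" using gi_carrier i u by blast
  have g2: "\<forall>j<3. gi i (inv\<^bsub>F3\<^esub> u) j \<in> carrier F3" using gi_carrier i iu by blast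
  have hom2: "ev F3 (gi i (inv\<^bsub>F3\<^esub> u)) \<in> hom F3 F3" using ev_hom[OF g2] .
  have wl: "\<forall>x\<in>set w. fst x < 3" using w by (auto simp: F3_carrier)
  have ul: "\<forall>x\<in>set u. fst x < 3" using u by (auto simp: F3_carrier)
  have "ev F3 (gi i (inv\<^bsub>F3\<^esub> u)) (ev F3 (gi i u) w) = ev F3 (ev F3 (gi i (inv\<^bsub>F3\<^esub> u)) \<circ> gi i u) w"
    using hom_ev[OF F3_group F3_group hom2] g1 wl by blast
  also have "\<dots> = ev F3 e3 w"
  proof (rule ev_cong, intro ballI)
    fix x assume "x \<in> set w"
    then have x3: "fst x < 3" using wl by blast
    show "(ev F3 (gi i (inv\<^bsub>F3\<^esub> u)) \<circ> gi i u) (fst x) = e3 (fst x)"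
    proof (cases "fst x = i")
      case False
      have "ev F3 (gi i (inv\<^bsub>F3\<^esub> u)) (e3 (fst x)) = gi i (inv\<^bsub>F3\<^esub> u) (fst x) \<otimes>\<^bsub>F3\<^esub> \<one>\<^bsub>F3\<^esub>"
        by (simp add: e3_def lt_def)
      also have "\<dots> = gi i (inv\<^bsub>F3\<^esub> u) (fst x)" using g2 x3 by simp
      also have "\<dots> = e3 (fst x)" using False by (simp add: gi_def)
      finally show ?thesis using False by (simp add: gi_def)
    next
      case True
      have evu: "ev F3 (gi i (inv\<^bsub>F3\<^esub> u)) u = u"
      proof -
        have "ev F3 (gi i (inv\<^bsub>F3\<^esub> u)) u = ev F3 e3 u"
          using u(2) by (intro ev_cong) (force simp: gi_def)
        then show ?thesis using ev_e3_carrier u by simp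
      qed
      have ei: "ev F3 (gi i (inv\<^bsub>F3\<^esub> u)) (e3 i) = e3 i \<otimes>\<^bsub>F3\<^esub> inv\<^bsub>F3\<^esub> u"
      proof -
        have "ev F3 (gi i (inv\<^bsub>F3\<^esub> u)) (e3 i) = gi i (inv\<^bsub>F3\<^esub> u) i \<otimes>\<^bsub>F3\<^esub> \<one>\<^bsub>F3\<^esub>"
          by (simp add: e3_def lt_def)
        also have "\<dots> = gi i (inv\<^bsub>F3\<^esub> u) i" using g2 i by simp
        finally show ?thesis by (simp add: gi_def)
      qed
      have "ev F3 (gi i (inv\<^bsub>F3\<^esub> u)) (e3 i \<otimes>\<^bsub>F3\<^esub> u)
          = ev F3 (gi i (inv\<^bsub>F3\<^esub> u)) (e3 i) \<otimes>\<^bsub>F3\<^esub> ev F3 (gi i (inv\<^bsub>F3\<^esub> u)) u"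
        using ev_mult_F3[OF g2 e3_carrier[OF i] u(1)] .
      also have "\<dots> = e3 i" using ei evu u e3_carrier[OF i] by (simp add: m_assoc)
      finally show ?thesis using True by (simp add: gi_def)
    qed
  qed
  also have "\<dots> = w" using ev_e3_carrier w by simp
  finally show ?thesis .
qed

lemma primitive_e3_mult:
  assumes i: "i < 3" and u: "u \<in> carrier F3" "i \<notin> fst ` set u"
  shows "primitive F3 (e3 i \<otimes>\<^bsub>F3\<^esub> u)"
proof -
  interpret group F3 by (rule F3_group)
  have iu: "inv\<^bsub>F3\<^esub> u \<in> carrier F3" "i \<notin> fst ` set (inv\<^bsub>F3\<^esub> u)"
    using u set_F3_inv[OF u(1)] by auto
  have "free_basis F3 (gi i u ` {0..<3})"
  proof (rule free_basis_aut)
    show "\<forall>j<3. gi i u j \<in> carrier F3" using gi_carrier i u by blast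
    show "\<forall>j<3. gi i (inv\<^bsub>F3\<^esub> u) j \<in> carrier F3" using gi_carrier i iu by blast
    show "\<forall>w\<in>carrier F3. ev F3 (gi i (inv\<^bsub>F3\<^esub> u)) (ev F3 (gi i u) w) = w"
      using Phi_inv i u by blast
    show "\<forall>w\<in>carrier F3. ev F3 (gi i u) (ev F3 (gi i (inv\<^bsub>F3\<^esub> u)) w) = w"
      using Phi_inv[OF i iu] u by simp
  qed
  moreover have "e3 i \<otimes>\<^bsub>F3\<^esub> u \<in> gi i u ` {0..<3}"
    using i by (force simp: gi_def)
  ultimately show ?thesis unfolding primitive_def by blast
qed

context group begin

lemma r_inv_assoc: "h \<in> carrier G \<Longrightarrow> z \<in> carrier G \<Longrightarrow> h \<otimes> (inv h \<otimes> z) = z"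
  by (simp add: m_assoc[symmetric])
lemma l_inv_assoc: "h \<in> carrier G \<Longrightarrow> z \<in> carrier G \<Longrightarrow> inv h \<otimes> (h \<otimes> z) = z"
  by (simp add: m_assoc[symmetric])

lemma levi:
  assumes y: "y \<in> carrier G" and h: "h \<in> carrier G"
    and H3: "h \<otimes> h \<otimes> h = \<one>"
    and A: "(y \<otimes> h) \<otimes> (y \<otimes> h) \<otimes> (y \<otimes> h) = \<one>"
    and B: "(y \<otimes> inv h) \<otimes> (y \<otimes> inv h) \<otimes> (y \<otimes> inv h) = \<one>"
  shows "y \<otimes> (inv h \<otimes> y \<otimes> h) = (inv h \<otimes> y \<otimes> h) \<otimes> y"
proof -
  have ih: "inv h \<in> carrier G" "inv y \<in> carrier G" using y h by auto
  have "(y \<otimes> h \<otimes> y) \<otimes> (h \<otimes> y \<otimes> h) = \<one>" using A y h by (simp add: m_assoc)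
  then have "inv (h \<otimes> y \<otimes> h) = y \<otimes> h \<otimes> y" using y h by (intro inv_equality) auto
  then have E1: "y \<otimes> h \<otimes> y = inv h \<otimes> inv y \<otimes> inv h" using y h by (simp add: inv_mult_group m_assoc)
  have "(y \<otimes> inv h \<otimes> y) \<otimes> (inv h \<otimes> y \<otimes> inv h) = \<one>" using B y h by (simp add: m_assoc)
  then have "inv (inv h \<otimes> y \<otimes> inv h) = y \<otimes> inv h \<otimes> y" using y h by (intro inv_equality) auto
  then have E2: "y \<otimes> inv h \<otimes> y = h \<otimes> inv y \<otimes> h" using y h by (simp add: inv_mult_group m_assoc)
  have hh: "h \<otimes> h = inv h"
  proof -
    have "(h \<otimes> h) \<otimes> h = \<one>" using H3 .
    then show ?thesis using h by (intro inv_equality[symmetric]) auto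
  qed
  have ihih: "inv h \<otimes> inv h = h"
  proof -
    have "inv h \<otimes> inv h = inv (h \<otimes> h)" using h by (simp add: inv_mult_group)
    also have "\<dots> = h" using hh h by simp
    finally show ?thesis .
  qed
  have "y \<otimes> (inv h \<otimes> y \<otimes> h) = (y \<otimes> inv h \<otimes> y) \<otimes> h" using y h by (simp add: m_assoc)
  also have "\<dots> = h \<otimes> inv y \<otimes> (h \<otimes> h)" using E2 y h by (simp add: m_assoc)
  also have "\<dots> = h \<otimes> inv y \<otimes> inv h" using hh by simp
  finally have L: "y \<otimes> (inv h \<otimes> y \<otimes> h) = h \<otimes> inv y \<otimes> inv h" .
  have "(inv h \<otimes> y \<otimes> h) \<otimes> y = inv h \<otimes> (y \<otimes> h \<otimes> y)" using y h by (simp add: m_assoc)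
  also have "\<dots> = (inv h \<otimes> inv h) \<otimes> inv y \<otimes> inv h" using E1 y h by (simp add: m_assoc)
  also have "\<dots> = h \<otimes> inv y \<otimes> inv h" using ihih by simp
  finally show ?thesis using L by simp
qed

definition cj :: "'a \<Rightarrow> 'a \<Rightarrow> 'a" where "cj h z = inv h \<otimes> z \<otimes> h"

lemma cj_closed: "h \<in> carrier G \<Longrightarrow> z \<in> carrier G \<Longrightarrow> cj h z \<in> carrier G"
  by (simp add: cj_def)

lemma cj_mult: "h \<in> carrier G \<Longrightarrow> a \<in> carrier G \<Longrightarrow> b \<in> carrier G \<Longrightarrow> cj h (a \<otimes> b) = cj h a \<otimes> cj h b"
  by (simp add: cj_def m_assoc r_inv_assoc)

lemma cj_one: "h \<in> carrier G \<Longrightarrow> cj h \<one> = \<one>"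
  by (simp add: cj_def)

lemma cj_cj: "h \<in> carrier G \<Longrightarrow> k \<in> carrier G \<Longrightarrow> z \<in> carrier G \<Longrightarrow> cj h (cj k z) = cj (k \<otimes> h) z"
  by (simp add: cj_def m_assoc inv_mult_group)

lemma cj_1: "z \<in> carrier G \<Longrightarrow> cj \<one> z = z"
  by (simp add: cj_def)

lemma cj_eq: "a \<in> carrier G \<Longrightarrow> b \<in> carrier G \<Longrightarrow> h \<in> carrier G \<Longrightarrow> cj h a = cj h b \<Longrightarrow> a = b"
  unfolding cj_def by simp

lemma cube_cj: "h \<in> carrier G \<Longrightarrow> z \<in> carrier G \<Longrightarrow> cj h z \<otimes> cj h z \<otimes> cj h z = cj h (z \<otimes> z \<otimes> z)"
  by (simp add: cj_mult)

lemma cube_formula: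
  assumes z: "z \<in> carrier G" and k: "k \<in> carrier G" and k3: "k \<otimes> k \<otimes> k = \<one>"
  shows "(z \<otimes> k) \<otimes> (z \<otimes> k) \<otimes> (z \<otimes> k) = z \<otimes> cj (inv k) z \<otimes> cj (inv k) (cj (inv k) z)"
proof -
  have "z \<otimes> cj (inv k) z \<otimes> cj (inv k) (cj (inv k) z) \<otimes> (k \<otimes> k \<otimes> k) = (z \<otimes> k) \<otimes> (z \<otimes> k) \<otimes> (z \<otimes> k)"
    using z k by (simp add: cj_def m_assoc l_inv_assoc)
  then show ?thesis using k3 z k by (simp add: cj_closed)
qed

end

definition lprod :: "('a, 'b) monoid_scheme \<Rightarrow> 'a list \<Rightarrow> 'a" where
  "lprod G l = foldr (\<lambda>a b. a \<otimes>\<^bsub>G\<^esub> b) l \<one>\<^bsub>G\<^esub>"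

lemma lprod_Nil[simp]: "lprod G [] = \<one>\<^bsub>G\<^esub>" by (simp add: lprod_def)
lemma lprod_Cons[simp]: "lprod G (a # l) = a \<otimes>\<^bsub>G\<^esub> lprod G l" by (simp add: lprod_def)

context group begin

lemma lprod_closed: "set l \<subseteq> carrier G \<Longrightarrow> lprod G l \<in> carrier G"
  by (induction l) auto

lemma lprod_append: "set l1 \<subseteq> carrier G \<Longrightarrow> set l2 \<subseteq> carrier G \<Longrightarrow> lprod G (l1 @ l2) = lprod G l1 \<otimes> lprod G l2"
  by (induction l1) (auto simp: m_assoc lprod_closed)

lemma lprod_cj: "h \<in> carrier G \<Longrightarrow> set l \<subseteq> carrier G \<Longrightarrow> lprod G (map (cj h) l) = cj h (lprod G l)"
  by (induction l) (auto simp: cj_one cj_mult lprod_closed)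

lemma cube_ext:
  assumes x: "x \<in> carrier G" and K: "subgroup K G"
    and Kc: "\<forall>k\<in>K. k \<otimes> k \<otimes> k = \<one>"
    and xu: "\<forall>u\<in>K. (x \<otimes> u) \<otimes> (x \<otimes> u) \<otimes> (x \<otimes> u) = \<one>"
  shows "\<forall>g\<in>generate G (insert x K). g \<otimes> g \<otimes> g = \<one>"
proof -
  have Ksub: "K \<subseteq> carrier G" by (rule subgroup.subset[OF K])
  have Kinv: "inv k \<in> K" if "k \<in> K" for k by (rule subgroup.m_inv_closed[OF K that])
  have Kmult: "a \<otimes> b \<in> K" if "a \<in> K" "b \<in> K" for a b by (rule subgroup.m_closed[OF K that])
  have K1: "\<one> \<in> K" by (rule subgroup.one_closed[OF K])
  have comm0: "x \<otimes> cj h x = cj h x \<otimes> x" if h: "h \<in> K" for h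
  proof -
    have hc: "h \<in> carrier G" using h Ksub by blast
    have "x \<otimes> (inv h \<otimes> x \<otimes> h) = (inv h \<otimes> x \<otimes> h) \<otimes> x"
      using levi[OF x hc] Kc xu h Kinv by blast
    then show ?thesis by (simp add: cj_def)
  qed
  define Xs where "Xs = (\<lambda>h. cj h x) ` K"
  have Xc: "Xs \<subseteq> carrier G"
  proof
    fix y assume "y \<in> Xs"
    then obtain h where "h \<in> K" "y = cj h x" unfolding Xs_def by blast
    then show "y \<in> carrier G" using Ksub x cj_closed by auto
  qed
  have commX: "a \<otimes> b = b \<otimes> a" if hyp: "a \<in> Xs" "b \<in> Xs" for a b
  proof -
    obtain h h' where hh: "h \<in> K" "h' \<in> K" "a = cj h x" "b = cj h' x" using hyp Xs_def by blast
    have hc: "h \<in> carrier G" "h' \<in> carrier G" using hh Ksub by auto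
    define k where "k = h' \<otimes> inv h"
    have k: "k \<in> K" using hh Kinv Kmult k_def by blast
    have kc: "k \<in> carrier G" using k Ksub by blast
    have kh: "k \<otimes> h = h'" using hc by (simp add: k_def m_assoc)
    have "cj h (x \<otimes> cj k x) = cj h (cj k x \<otimes> x)" using comm0[OF k] by simp
    then have "cj h x \<otimes> cj (k \<otimes> h) x = cj (k \<otimes> h) x \<otimes> cj h x"
      using hc kc x by (simp add: cj_mult cj_cj cj_closed)
    then show ?thesis using hh kh by simp
  qed
  define A where "A = {lprod G l | l. set l \<subseteq> Xs}"
  have Ac: "A \<subseteq> carrier G"
  proof
    fix a assume "a \<in> A"
    then obtain l where "set l \<subseteq> Xs" "a = lprod G l" unfolding A_def by blast
    then show "a \<in> carrier G" using Xc lprod_closed by (metis subset_trans)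
  qed
  have A_mult: "a \<otimes> b \<in> A" if hyp: "a \<in> A" "b \<in> A" for a b
  proof -
    obtain l1 l2 where "set l1 \<subseteq> Xs" "set l2 \<subseteq> Xs" "a = lprod G l1" "b = lprod G l2"
      using hyp A_def by blast
    then have "a \<otimes> b = lprod G (l1 @ l2)" "set (l1 @ l2) \<subseteq> Xs" using Xc by (auto simp: lprod_append)
    then show ?thesis unfolding A_def by blast
  qed
  have XA: "y \<in> A" if hyp: "y \<in> Xs" for y
  proof -
    have "lprod G [y] = y" using hyp Xc by auto
    moreover have "set [y] \<subseteq> Xs" using hyp by simp
    ultimately show ?thesis unfolding A_def by (metis (mono_tags, lifting) mem_Collect_eq)
  qed
  have A1: "\<one> \<in> A"
  proof -
    have "set [] \<subseteq> Xs" by simp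
    then have "lprod G [] \<in> A" unfolding A_def by blast
    then show ?thesis by simp
  qed
  have xX: "x \<in> Xs" unfolding Xs_def using image_eqI[where f="\<lambda>h. cj h x", OF cj_1[OF x, symmetric] K1] .
  have A_cj: "cj k a \<in> A" if hyp: "k \<in> K" "a \<in> A" for k a
  proof -
    obtain l where l: "set l \<subseteq> Xs" "a = lprod G l" using hyp A_def by blast
    have kc: "k \<in> carrier G" using hyp Ksub by blast
    have "cj k a = lprod G (map (cj k) l)" using l kc Xc lprod_cj by auto
    moreover have "set (map (cj k) l) \<subseteq> Xs"
    proof
      fix z assume "z \<in> set (map (cj k) l)"
      then obtain y where y: "y \<in> Xs" "z = cj k y" using l by auto
      then obtain h where h: "h \<in> K" "y = cj h x" unfolding Xs_def by blast
      then have "z = cj (h \<otimes> k) x" using y kc Ksub x cj_cj by auto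
      then show "z \<in> Xs" unfolding Xs_def using h hyp Kmult by blast
    qed
    ultimately show ?thesis unfolding A_def by blast
  qed
  have commXA: "y \<otimes> lprod G l = lprod G l \<otimes> y" if "y \<in> Xs" "set l \<subseteq> Xs" for y l
    using that(2)
  proof (induction l)
    case Nil then show ?case using that Xc by auto
  next
    case (Cons a l)
    have c: "y \<in> carrier G" "a \<in> carrier G" "lprod G l \<in> carrier G" using Cons.prems that Xc lprod_closed by auto
    have "y \<otimes> lprod G (a # l) = (y \<otimes> a) \<otimes> lprod G l" using c by (simp add: m_assoc)
    also have "\<dots> = (a \<otimes> y) \<otimes> lprod G l" using commX that Cons.prems by simp
    also have "\<dots> = a \<otimes> (lprod G l \<otimes> y)" using c Cons by (simp add: m_assoc)
    also have "\<dots> = lprod G (a # l) \<otimes> y" using c by (simp add: m_assoc)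
    finally show ?case .
  qed
  have commA: "a \<otimes> b = b \<otimes> a" if hyp: "a \<in> A" "b \<in> A" for a b
  proof -
    obtain l1 l2 where l: "set l1 \<subseteq> Xs" "set l2 \<subseteq> Xs" "a = lprod G l1" "b = lprod G l2"
      using hyp A_def by blast
    have "lprod G l1 \<otimes> lprod G l2 = lprod G l2 \<otimes> lprod G l1" using l(1)
    proof (induction l1)
      case Nil then show ?case using l Xc lprod_closed by auto
    next
      case (Cons y l1)
      have c: "y \<in> carrier G" "lprod G l1 \<in> carrier G" "lprod G l2 \<in> carrier G"
        using Cons.prems l Xc lprod_closed by auto
      have "lprod G (y # l1) \<otimes> lprod G l2 = y \<otimes> (lprod G l1 \<otimes> lprod G l2)" using c by (simp add: m_assoc)
      also have "\<dots> = (y \<otimes> lprod G l2) \<otimes> lprod G l1" using Cons c by (simp add: m_assoc)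
      also have "\<dots> = (lprod G l2 \<otimes> y) \<otimes> lprod G l1" using commXA Cons.prems l by simp
      also have "\<dots> = lprod G l2 \<otimes> lprod G (y # l1)" using c by (simp add: m_assoc)
      finally show ?case .
    qed
    then show ?thesis using l by simp
  qed
  have decomp: "\<exists>\<alpha>\<in>A. \<exists>k\<in>K. g = \<alpha> \<otimes> k" if "g \<in> generate G (insert x K)" for g
    using that
  proof (induction rule: generate.induct)
    case one then show ?case using A1 K1 by force
  next
    case (incl h)
    then show ?case
    proof
      assume "h = x" then show ?thesis using xX XA K1 x by force
    next
      assume "h \<in> K" then show ?thesis using A1 Ksub by force
    qed
  next
    case (inv h)
    then show ?case
    proof
      assume hx: "h = x"
      have "x \<otimes> x \<otimes> x = \<one>" using xu K1 x by force
      then have "inv x = x \<otimes> x" using x by (intro inv_equality) auto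
      moreover have "x \<otimes> x \<in> A" using xX XA A_mult by blast
      ultimately have "inv h = (x \<otimes> x) \<otimes> \<one>" using hx x by simp
      then show ?thesis using \<open>x \<otimes> x \<in> A\<close> K1 by blast
    next
      assume "h \<in> K" then show ?thesis using A1 Ksub Kinv by force
    qed
  next
    case (eng h1 h2)
    obtain a1 k1 a2 k2 where d: "a1 \<in> A" "k1 \<in> K" "h1 = a1 \<otimes> k1" "a2 \<in> A" "k2 \<in> K" "h2 = a2 \<otimes> k2"
      using eng by blast
    have c: "a1 \<in> carrier G" "a2 \<in> carrier G" "k1 \<in> carrier G" "k2 \<in> carrier G" using d Ac Ksub by auto
    have "h1 \<otimes> h2 = (a1 \<otimes> cj (inv k1) a2) \<otimes> (k1 \<otimes> k2)"
      using c d by (simp add: cj_def m_assoc l_inv_assoc)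
    moreover have "a1 \<otimes> cj (inv k1) a2 \<in> A" using A_mult A_cj Kinv d by blast
    moreover have "k1 \<otimes> k2 \<in> K" using Kmult d by blast
    ultimately show ?case by blast
  qed
  have cubeA: "\<forall>k\<in>K. (lprod G l \<otimes> k) \<otimes> (lprod G l \<otimes> k) \<otimes> (lprod G l \<otimes> k) = \<one>" if "set l \<subseteq> Xs" for l
    using that
  proof (induction l)
    case Nil then show ?case using Kc Ksub by auto
  next
    case (Cons y l)
    show ?case
    proof
      fix k assume k: "k \<in> K"
      have kc: "k \<in> carrier G" "inv k \<in> carrier G" using k Ksub by auto
      have ikK: "inv k \<in> K" using Kinv k by blast
      define c where "c = cj (inv k)"
      define b where "b = lprod G l"
      have yX: "y \<in> Xs" using Cons.prems by simp
      have bA: "b \<in> A" unfolding b_def A_def using Cons.prems by auto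
      have yA: "y \<in> A" using XA yX by blast
      have cA: "c z \<in> A" if "z \<in> A" for z unfolding c_def using A_cj ikK that by blast
      have yc: "y \<in> carrier G" "b \<in> carrier G" using yA bA Ac by auto
      have cc: "c z \<in> carrier G" if "z \<in> carrier G" for z unfolding c_def using cj_closed kc that by blast
      have cm: "c (p \<otimes> q) = c p \<otimes> c q" if "p \<in> carrier G" "q \<in> carrier G" for p q
        unfolding c_def using cj_mult kc that by blast
      have k3: "k \<otimes> k \<otimes> k = \<one>" using Kc k by blast
      have yk: "(y \<otimes> k) \<otimes> (y \<otimes> k) \<otimes> (y \<otimes> k) = \<one>"
      proof -
        obtain h where h: "h \<in> K" "y = cj h x" using yX Xs_def by blast
        have hc: "h \<in> carrier G" "inv h \<in> carrier G" using h Ksub by auto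
        define u where "u = h \<otimes> k \<otimes> inv h"
        have uK: "u \<in> K" unfolding u_def using h k Kmult Kinv by blast
        have uc: "u \<in> carrier G" using uK Ksub by blast
        have "y \<otimes> k = cj h (x \<otimes> u)" using h hc kc x by (simp add: cj_def u_def m_assoc)
        then have "(y \<otimes> k) \<otimes> (y \<otimes> k) \<otimes> (y \<otimes> k) = cj h ((x \<otimes> u) \<otimes> (x \<otimes> u) \<otimes> (x \<otimes> u))"
          using cube_cj hc x uc by simp
        also have "\<dots> = \<one>" using xu uK cj_one hc by simp
        finally show ?thesis .
      qed
      have bk: "(b \<otimes> k) \<otimes> (b \<otimes> k) \<otimes> (b \<otimes> k) = \<one>" using Cons k b_def by auto
      have F1: "y \<otimes> c y \<otimes> c (c y) = \<one>" using cube_formula[OF yc(1) kc(1) k3] yk c_def by simp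
      have F2: "b \<otimes> c b \<otimes> c (c b) = \<one>" using cube_formula[OF yc(2) kc(1) k3] bk c_def by simp
      have "lprod G (y # l) = y \<otimes> b" by (simp add: b_def)
      then have "(lprod G (y # l) \<otimes> k) \<otimes> (lprod G (y # l) \<otimes> k) \<otimes> (lprod G (y # l) \<otimes> k)
           = (y \<otimes> b) \<otimes> c (y \<otimes> b) \<otimes> c (c (y \<otimes> b))"
        using cube_formula[of "y \<otimes> b" k] yc kc k3 c_def by simp
      also have "\<dots> = y \<otimes> (b \<otimes> c y) \<otimes> c b \<otimes> (c (c y) \<otimes> c (c b))"
        using yc cc cm by (simp add: m_assoc)
      also have "\<dots> = y \<otimes> (c y \<otimes> b) \<otimes> c b \<otimes> (c (c y) \<otimes> c (c b))"
        using commA[OF bA cA[OF yA]] by simp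
      also have "\<dots> = y \<otimes> c y \<otimes> ((b \<otimes> c b) \<otimes> c (c y)) \<otimes> c (c b)"
        using yc cc cm by (simp add: m_assoc)
      also have "\<dots> = y \<otimes> c y \<otimes> (c (c y) \<otimes> (b \<otimes> c b)) \<otimes> c (c b)"
        using commA[OF A_mult[OF bA cA[OF bA]] cA[OF cA[OF yA]]] by simp
      also have "\<dots> = (y \<otimes> c y \<otimes> c (c y)) \<otimes> (b \<otimes> c b \<otimes> c (c b))"
        using yc cc cm by (simp add: m_assoc)
      also have "\<dots> = \<one>" using F1 F2 by simp
      finally show "(lprod G (y # l) \<otimes> k) \<otimes> (lprod G (y # l) \<otimes> k) \<otimes> (lprod G (y # l) \<otimes> k) = \<one>" .
    qed
  qed
  show ?thesis
  proof
    fix g assume "g \<in> generate G (insert x K)"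
    then obtain a k where ak: "a \<in> A" "k \<in> K" "g = a \<otimes> k" using decomp by blast
    then obtain l where l: "set l \<subseteq> Xs" "a = lprod G l" unfolding A_def by blast
    show "g \<otimes> g \<otimes> g = \<one>" using cubeA[OF l(1)] ak l by simp
  qed
qed

end

lemma (in group) pow3: "x \<in> carrier G \<Longrightarrow> x [^] (3::nat) = x \<otimes> x \<otimes> x"
  by (simp add: numeral_3_eq_3)

lemma (in group) normal_closure_normal:
  assumes S: "S \<subseteq> carrier G"
  shows "normal_closure G S \<lhd> G"
proof -
  let ?F = "{N. N \<lhd> G \<and> S \<subseteq> N}"
  have ne: "?F \<noteq> {}" using normal_self S by blast
  have sg: "subgroup (\<Inter>?F) G"
    by (rule subgroups_Inter) (use ne normal_imp_subgroup in auto)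
  show ?thesis unfolding normal_closure_def
  proof (rule normal_invI[OF sg])
    fix x h assume x: "x \<in> carrier G" and h: "h \<in> \<Inter>?F"
    show "x \<otimes> h \<otimes> inv x \<in> \<Inter>?F"
    proof
      fix N assume N: "N \<in> ?F"
      then have "h \<in> N" using h by blast
      then show "x \<otimes> h \<otimes> inv x \<in> N" using N x normal_inv_iff by blast
    qed
  qed
qed

lemma normal_closure_sub: "S \<subseteq> normal_closure G S"
  unfolding normal_closure_def by blast

lemma normal_closure_min: "N \<lhd> G \<Longrightarrow> S \<subseteq> N \<Longrightarrow> normal_closure G S \<subseteq> N"
  unfolding normal_closure_def by blast

lemma primitive_carrier: "primitive G x \<Longrightarrow> x \<in> carrier G"
  unfolding primitive_def free_basis_def by blast

definition SBT :: "(nat \<times> bool) list set" where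
  "SBT = {x [^]\<^bsub>F3\<^esub> (3::nat) | x. primitive F3 x}"

lemma SBT_carrier: "SBT \<subseteq> carrier F3"
proof
  fix y assume "y \<in> SBT"
  then obtain x where x: "primitive F3 x" "y = x [^]\<^bsub>F3\<^esub> (3::nat)" unfolding SBT_def by blast
  have "x \<in> carrier F3" using primitive_carrier[OF x(1)] .
  then show "y \<in> carrier F3" using x(2) monoid.nat_pow_closed[OF group.is_monoid[OF F3_group]] by simp
qed

lemma N_BT_normal: "N_BT \<lhd> F3"
  proof -
  have "normal_closure F3 SBT \<lhd> F3" using group.normal_closure_normal[OF F3_group SBT_carrier] .
  then show ?thesis unfolding N_BT_def SBT_def .
qed

abbreviation pr :: "(nat \<times> bool) list set \<Rightarrow> (nat \<times> bool) list \<Rightarrow> (nat \<times> bool) list set" where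
  "pr N a \<equiv> N #>\<^bsub>F3\<^esub> a"

lemma gen_image:
  assumes NN: "N \<lhd> F3" and u: "u \<in> generate (F3 Mod N) ((\<lambda>i. pr N (e3 i)) ` I)" and I: "I \<subseteq> {0..<3}"
  shows "\<exists>w\<in>carrier F3. fst ` set w \<subseteq> I \<and> u = pr N w"
proof -
  interpret normal N F3 by (rule NN)
  interpret F: group F3 by (rule F3_group)
  have hom: "pr N \<in> hom F3 (F3 Mod N)" by (rule r_coset_hom_Mod)
  interpret gh: group_hom F3 "F3 Mod N" "pr N"
    using hom factorgroup_is_group F3_group by (simp add: group_hom_def group_hom_axioms_def)
  show ?thesis using u
  proof (induction rule: generate.induct)
    case one
    have Nsub: "N \<subseteq> carrier F3" using subgroup.subset[OF normal_imp_subgroup[OF NN]] .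
    have "pr N [] = N" using group.coset_mult_one[OF F3_group Nsub] by (simp add: F3_one)
    moreover have "[] \<in> carrier F3" by (simp add: F3_carrier)
    moreover have "\<one>\<^bsub>F3 Mod N\<^esub> = N" by (simp add: FactGroup_def)
    ultimately show ?case by (metis empty_set empty_subsetI image_empty)
  next
    case (incl h)
    then obtain i where i: "i \<in> I" "h = pr N (e3 i)" by blast
    have "e3 i \<in> carrier F3" using i I e3_carrier by auto
    moreover have "fst ` set (e3 i) \<subseteq> I" using i by (simp add: e3_def)
    ultimately show ?case using i by blast
  next
    case (inv h)
    then obtain i where i: "i \<in> I" "h = pr N (e3 i)" by blast
    have ec: "e3 i \<in> carrier F3" using i I e3_carrier by auto
    have "inv\<^bsub>F3 Mod N\<^esub> h = pr N (inv\<^bsub>F3\<^esub> (e3 i))" using gh.hom_inv[OF ec] i by simp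
    moreover have "fst ` set (inv\<^bsub>F3\<^esub> (e3 i)) \<subseteq> I" using set_F3_inv[OF ec] i by (auto simp: e3_def)
    moreover have "inv\<^bsub>F3\<^esub> (e3 i) \<in> carrier F3" using ec by simp
    ultimately show ?case by blast
  next
    case (eng h1 h2)
    then obtain w1 w2 where w: "w1 \<in> carrier F3" "fst ` set w1 \<subseteq> I" "h1 = pr N w1"
      "w2 \<in> carrier F3" "fst ` set w2 \<subseteq> I" "h2 = pr N w2" by blast
    have "h1 \<otimes>\<^bsub>F3 Mod N\<^esub> h2 = pr N (w1 \<otimes>\<^bsub>F3\<^esub> w2)" using gh.hom_mult w by simp
    moreover have "fst ` set (w1 \<otimes>\<^bsub>F3\<^esub> w2) \<subseteq> I"
    proof -
      have "set (w1 \<otimes>\<^bsub>F3\<^esub> w2) \<subseteq> set w1 \<union> set w2" using set_reduce[of "w1 @ w2"] by (simp add: F3_mult)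
      then show ?thesis using w(2,5) by blast
    qed
    moreover have "w1 \<otimes>\<^bsub>F3\<^esub> w2 \<in> carrier F3" using w by simp
    ultimately show ?case by blast
  qed
qed

lemma all_cubes_N:
  assumes w: "w \<in> carrier F3"
  shows "w [^]\<^bsub>F3\<^esub> (3::nat) \<in> N_BT"
proof -
  define N where "N = N_BT"
  have NN: "N \<lhd> F3" unfolding N_def by (rule N_BT_normal)
  interpret normal N F3 by (rule NN)
  define Q where "Q = F3 Mod N"
  have Qg: "group Q" unfolding Q_def by (rule factorgroup_is_group)
  have hom: "pr N \<in> hom F3 Q" unfolding Q_def by (rule r_coset_hom_Mod)
  interpret Q: group Q by (rule Qg)
  interpret gh: group_hom F3 Q "pr N"
    using hom Qg F3_group by (simp add: group_hom_def group_hom_axioms_def)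
  have Nsg: "subgroup N F3" using normal_imp_subgroup[OF NN] .
  have Q1: "\<one>\<^bsub>Q\<^esub> = N" by (simp add: Q_def FactGroup_def)
  have prc: "pr N a \<in> carrier Q" if "a \<in> carrier F3" for a using hom that by (auto simp: hom_def)
  have prim: "pr N p \<otimes>\<^bsub>Q\<^esub> pr N p \<otimes>\<^bsub>Q\<^esub> pr N p = \<one>\<^bsub>Q\<^esub>" if p: "primitive F3 p" for p
  proof -
    have pc: "p \<in> carrier F3" using primitive_carrier[OF p] .
    have "p [^]\<^bsub>F3\<^esub> (3::nat) \<in> SBT" unfolding SBT_def using p by blast
    have NS: "N = normal_closure F3 SBT" unfolding N_def N_BT_def SBT_def ..
    have sub: "SBT \<subseteq> N" unfolding NS by (rule normal_closure_sub)
    have "p [^]\<^bsub>F3\<^esub> (3::nat) \<in> N" using sub \<open>p [^]\<^bsub>F3\<^esub> (3::nat) \<in> SBT\<close> by (rule subsetD)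
    then have pN: "p \<otimes>\<^bsub>F3\<^esub> p \<otimes>\<^bsub>F3\<^esub> p \<in> N" unfolding pow3[OF pc] .
    have ppc: "p \<otimes>\<^bsub>F3\<^esub> p \<in> carrier F3" using pc by simp
    have h1: "pr N (p \<otimes>\<^bsub>F3\<^esub> p \<otimes>\<^bsub>F3\<^esub> p) = pr N (p \<otimes>\<^bsub>F3\<^esub> p) \<otimes>\<^bsub>Q\<^esub> pr N p"
      by (rule gh.hom_mult[OF ppc pc])
    have h2: "pr N (p \<otimes>\<^bsub>F3\<^esub> p) = pr N p \<otimes>\<^bsub>Q\<^esub> pr N p"
      by (rule gh.hom_mult[OF pc pc])
    have pppc: "p \<otimes>\<^bsub>F3\<^esub> p \<otimes>\<^bsub>F3\<^esub> p \<in> carrier F3" using ppc pc by (rule m_closed)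
    have h3: "pr N (p \<otimes>\<^bsub>F3\<^esub> p \<otimes>\<^bsub>F3\<^esub> p) = N" by (rule group.coset_join2[OF F3_group pppc Nsg pN])
    show ?thesis using h1 h2 h3 Q1 by simp
  qed
  define \<pi> where "\<pi> i = pr N (e3 i)" for i
  have \<pi>c: "\<pi> i \<in> carrier Q" if "i < 3" for i unfolding \<pi>_def using prc e3_carrier that by blast
  define K1 where "K1 = generate Q (\<pi> ` {2})"
  define K2 where "K2 = generate Q (\<pi> ` {1,2})"
  have stepa: "\<forall>g\<in>generate Q (insert (\<pi> 2) {\<one>\<^bsub>Q\<^esub>}). g \<otimes>\<^bsub>Q\<^esub> g \<otimes>\<^bsub>Q\<^esub> g = \<one>\<^bsub>Q\<^esub>"
  proof (rule Q.cube_ext[OF \<pi>c Q.triv_subgroup])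
    show "\<forall>k\<in>{\<one>\<^bsub>Q\<^esub>}. k \<otimes>\<^bsub>Q\<^esub> k \<otimes>\<^bsub>Q\<^esub> k = \<one>\<^bsub>Q\<^esub>" by simp
    have "primitive F3 (e3 2 \<otimes>\<^bsub>F3\<^esub> [])" by (rule primitive_e3_mult) (auto simp: F3_carrier)
    then have "primitive F3 (e3 2)" using e3_carrier[of 2] by (simp add: F3_one[symmetric])
    then show "\<forall>u\<in>{\<one>\<^bsub>Q\<^esub>}. \<pi> 2 \<otimes>\<^bsub>Q\<^esub> u \<otimes>\<^bsub>Q\<^esub> (\<pi> 2 \<otimes>\<^bsub>Q\<^esub> u) \<otimes>\<^bsub>Q\<^esub> (\<pi> 2 \<otimes>\<^bsub>Q\<^esub> u) = \<one>\<^bsub>Q\<^esub>"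
      using prim \<pi>c[of 2] by (simp add: \<pi>_def)
  qed simp
  have K1sub: "\<pi> ` {2} \<subseteq> carrier Q" using \<pi>c by auto
  have K1c: "\<forall>k\<in>K1. k \<otimes>\<^bsub>Q\<^esub> k \<otimes>\<^bsub>Q\<^esub> k = \<one>\<^bsub>Q\<^esub>"
  proof -
    have "K1 \<subseteq> generate Q (insert (\<pi> 2) {\<one>\<^bsub>Q\<^esub>})" unfolding K1_def by (rule Q.mono_generate) auto
    then show ?thesis using stepa by blast
  qed
  have xu: "\<pi> i \<otimes>\<^bsub>Q\<^esub> u \<otimes>\<^bsub>Q\<^esub> (\<pi> i \<otimes>\<^bsub>Q\<^esub> u) \<otimes>\<^bsub>Q\<^esub> (\<pi> i \<otimes>\<^bsub>Q\<^esub> u) = \<one>\<^bsub>Q\<^esub>"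
    if i: "i < 3" "i \<notin> I" and I: "I \<subseteq> {0..<3}" and u: "u \<in> generate Q (\<pi> ` I)" for i I u
  proof -
    have "u \<in> generate (F3 Mod N) ((\<lambda>i. pr N (e3 i)) ` I)" using u by (simp add: Q_def \<pi>_def)
    then obtain v where v: "v \<in> carrier F3" "fst ` set v \<subseteq> I" "u = pr N v"
      using gen_image[OF NN _ I] by blast
    have "i \<notin> fst ` set v" using v i by blast
    then have pv: "primitive F3 (e3 i \<otimes>\<^bsub>F3\<^esub> v)" using primitive_e3_mult[OF i(1) v(1)] by blast
    have "\<pi> i \<otimes>\<^bsub>Q\<^esub> u = pr N (e3 i \<otimes>\<^bsub>F3\<^esub> v)" using v e3_carrier[OF i(1)] by (simp add: \<pi>_def)
    then show ?thesis using prim[OF pv] by simp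
  qed
  have stepb: "\<forall>g\<in>generate Q (insert (\<pi> 1) K1). g \<otimes>\<^bsub>Q\<^esub> g \<otimes>\<^bsub>Q\<^esub> g = \<one>\<^bsub>Q\<^esub>"
  proof (rule Q.cube_ext[OF \<pi>c])
    show "subgroup K1 Q" unfolding K1_def using Q.generate_is_subgroup[OF K1sub] .
    show "\<forall>k\<in>K1. k \<otimes>\<^bsub>Q\<^esub> k \<otimes>\<^bsub>Q\<^esub> k = \<one>\<^bsub>Q\<^esub>" using K1c .
    show "\<forall>u\<in>K1. \<pi> 1 \<otimes>\<^bsub>Q\<^esub> u \<otimes>\<^bsub>Q\<^esub> (\<pi> 1 \<otimes>\<^bsub>Q\<^esub> u) \<otimes>\<^bsub>Q\<^esub> (\<pi> 1 \<otimes>\<^bsub>Q\<^esub> u) = \<one>\<^bsub>Q\<^esub>"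
      unfolding K1_def using xu[of 1 "{2}"] by auto
  qed simp
  have K2sub: "\<pi> ` {1,2} \<subseteq> carrier Q" using \<pi>c by auto
  have K2c: "\<forall>k\<in>K2. k \<otimes>\<^bsub>Q\<^esub> k \<otimes>\<^bsub>Q\<^esub> k = \<one>\<^bsub>Q\<^esub>"
  proof -
    have "\<pi> 2 \<in> K1" unfolding K1_def by (rule generate.incl) simp
    then have "K2 \<subseteq> generate Q (insert (\<pi> 1) K1)" unfolding K2_def by (intro Q.mono_generate) auto
    then show ?thesis using stepb by blast
  qed
  have stepc: "\<forall>g\<in>generate Q (insert (\<pi> 0) K2). g \<otimes>\<^bsub>Q\<^esub> g \<otimes>\<^bsub>Q\<^esub> g = \<one>\<^bsub>Q\<^esub>"
  proof (rule Q.cube_ext[OF \<pi>c])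
    show "subgroup K2 Q" unfolding K2_def using Q.generate_is_subgroup[OF K2sub] .
    show "\<forall>k\<in>K2. k \<otimes>\<^bsub>Q\<^esub> k \<otimes>\<^bsub>Q\<^esub> k = \<one>\<^bsub>Q\<^esub>" using K2c .
    show "\<forall>u\<in>K2. \<pi> 0 \<otimes>\<^bsub>Q\<^esub> u \<otimes>\<^bsub>Q\<^esub> (\<pi> 0 \<otimes>\<^bsub>Q\<^esub> u) \<otimes>\<^bsub>Q\<^esub> (\<pi> 0 \<otimes>\<^bsub>Q\<^esub> u) = \<one>\<^bsub>Q\<^esub>"
      unfolding K2_def using xu[of 0 "{1,2}"] by auto
  qed simp
  have wgen: "pr N w \<in> generate Q (insert (\<pi> 0) K2)"
  proof -
    have lw: "\<forall>x\<in>set w. fst x < 3" using w by (auto simp: F3_carrier)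
    have "pr N w = pr N (ev F3 e3 w)" using ev_e3_carrier[OF w] by simp
    also have "\<dots> = ev Q (pr N \<circ> e3) w"
      using hom_ev[OF F3_group Qg hom] lw e3_carrier by blast
    also have "pr N \<circ> e3 = \<pi>" by (rule ext) (simp add: \<pi>_def)
    finally have "pr N w = ev Q \<pi> w" .
    moreover have "ev Q \<pi> w \<in> generate Q (\<pi> ` {0..<3})"
      using lw \<pi>c by (intro Q.ev_generate) auto
    moreover have "generate Q (\<pi> ` {0..<3}) \<subseteq> generate Q (insert (\<pi> 0) K2)"
    proof (rule Q.mono_generate)
      have "\<pi> 1 \<in> K2" "\<pi> 2 \<in> K2" unfolding K2_def by (auto intro: generate.incl)
      moreover have "{0..<3::nat} = {0,1,2}" by auto
      ultimately show "\<pi> ` {0..<3} \<subseteq> insert (\<pi> 0) K2" by auto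
    qed
    ultimately show ?thesis by auto
  qed
  have "pr N w \<otimes>\<^bsub>Q\<^esub> pr N w \<otimes>\<^bsub>Q\<^esub> pr N w = \<one>\<^bsub>Q\<^esub>" using stepc wgen by blast
  then have "pr N (w \<otimes>\<^bsub>F3\<^esub> w \<otimes>\<^bsub>F3\<^esub> w) = N" using w Q1 by simp
  then have "w \<otimes>\<^bsub>F3\<^esub> w \<otimes>\<^bsub>F3\<^esub> w \<in> N" using group.coset_join1[OF F3_group _ _ Nsg] w by simp
  then show ?thesis using group.pow3[OF F3_group w] by (simp add: N_def)
qed

lemma NB_eq: "N_B = N_BT"
proof
  interpret F: group F3 by (rule F3_group)
  define SB where "SB = {x [^]\<^bsub>F3\<^esub> (3::nat) | x. x \<in> carrier F3}"
  have SBc: "SB \<subseteq> carrier F3"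
  proof
    fix y assume "y \<in> SB"
    then obtain x where "x \<in> carrier F3" "y = x [^]\<^bsub>F3\<^esub> (3::nat)" unfolding SB_def by blast
    then show "y \<in> carrier F3" by simp
  qed
  have NBd: "N_B = normal_closure F3 SB" unfolding N_B_def SB_def ..
  have NBTd: "N_BT = normal_closure F3 SBT" unfolding N_BT_def SBT_def ..
  have SB_BT: "SB \<subseteq> N_BT"
  proof
    fix y assume "y \<in> SB"
    then obtain x where "x \<in> carrier F3" "y = x [^]\<^bsub>F3\<^esub> (3::nat)" unfolding SB_def by blast
    then show "y \<in> N_BT" using all_cubes_N by blast
  qed
  show "N_B \<subseteq> N_BT" unfolding NBd by (rule normal_closure_min[OF N_BT_normal SB_BT])
  have NBn: "N_B \<lhd> F3" unfolding NBd by (rule F.normal_closure_normal[OF SBc])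
  have SBT_SB: "SBT \<subseteq> N_B"
  proof
    fix y assume "y \<in> SBT"
    then obtain x where x: "primitive F3 x" "y = x [^]\<^bsub>F3\<^esub> (3::nat)" unfolding SBT_def by blast
    have "x \<in> carrier F3" by (rule primitive_carrier[OF x(1)])
    then have "y \<in> SB" unfolding SB_def using x(2) by blast
    moreover have "SB \<subseteq> N_B" unfolding NBd by (rule normal_closure_sub)
    ultimately show "y \<in> N_B" by (rule rev_subsetD)
  qed
  show "N_BT \<subseteq> N_B" unfolding NBTd by (rule normal_closure_min[OF NBn SBT_SB])
qed

theorem lemma6p4:
  shows "(\<lambda>C. N_B <#>\<^bsub>F3\<^esub> C) \<in> iso (F3 Mod N_BT) (F3 Mod N_B)"
proof -
  define N where "N = N_BT"
  have NN: "N \<lhd> F3" unfolding N_def by (rule N_BT_normal)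
  interpret normal N F3 by (rule NN)
  have Nsg: "subgroup N F3" by (rule normal_imp_subgroup[OF NN])
  have Nsub: "N \<subseteq> carrier F3" by (rule subgroup.subset[OF Nsg])
  have fid: "N <#>\<^bsub>F3\<^esub> C = C" if C: "C \<in> carrier (F3 Mod N)" for C
  proof -
    have "C \<in> rcosets\<^bsub>F3\<^esub> N" using C by (simp add: FactGroup_def)
    then obtain a where a: "a \<in> carrier F3" "C = N #>\<^bsub>F3\<^esub> a"
      unfolding RCOSETS_def by blast
    have "N <#>\<^bsub>F3\<^esub> (N #>\<^bsub>F3\<^esub> a) = (N <#>\<^bsub>F3\<^esub> N) #>\<^bsub>F3\<^esub> a"
      by (rule setmult_rcos_assoc[OF Nsub Nsub a(1)])
    also have "N <#>\<^bsub>F3\<^esub> N = N" by (rule subgroup_mult_id[OF Nsg])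
    finally show ?thesis using a by simp
  qed
  have "(\<lambda>C. N <#>\<^bsub>F3\<^esub> C) \<in> iso (F3 Mod N) (F3 Mod N)"
  proof -
    have hom: "(\<lambda>C. N <#>\<^bsub>F3\<^esub> C) \<in> hom (F3 Mod N) (F3 Mod N)"
    proof (rule homI)
      fix C assume "C \<in> carrier (F3 Mod N)"
      then show "N <#>\<^bsub>F3\<^esub> C \<in> carrier (F3 Mod N)" using fid[of C] by simp
    next
      fix C D assume CD: "C \<in> carrier (F3 Mod N)" "D \<in> carrier (F3 Mod N)"
      have CDc: "C \<otimes>\<^bsub>F3 Mod N\<^esub> D \<in> carrier (F3 Mod N)"
        by (rule monoid.m_closed[OF group.is_monoid[OF factorgroup_is_group] CD])
      show "N <#>\<^bsub>F3\<^esub> (C \<otimes>\<^bsub>F3 Mod N\<^esub> D) = (N <#>\<^bsub>F3\<^esub> C) \<otimes>\<^bsub>F3 Mod N\<^esub> (N <#>\<^bsub>F3\<^esub> D)"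
        unfolding fid[OF CDc] fid[OF CD(1)] fid[OF CD(2)] ..
    qed
    have "bij_betw (\<lambda>C. N <#>\<^bsub>F3\<^esub> C) (carrier (F3 Mod N)) (carrier (F3 Mod N))
        = bij_betw (\<lambda>C. C) (carrier (F3 Mod N)) (carrier (F3 Mod N))"
      by (rule bij_betw_cong) (rule fid)
    then have "bij_betw (\<lambda>C. N <#>\<^bsub>F3\<^esub> C) (carrier (F3 Mod N)) (carrier (F3 Mod N))"
      using bij_betw_id[of "carrier (F3 Mod N)"] unfolding id_def by simp
    then show ?thesis using hom unfolding iso_def by blast
  qed
  then show ?thesis unfolding NB_eq N_def .
qed

end
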